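(* In the IM-OCP setting described in the context, with $r_1\in[0,B]$ and any non-increasing sequence of positive step sizes $(\eta_t)_{t\ge1}$, for every $T\ge1$ the expected miscoverage error satisfies $$\overline{\mathrm{MisCov}}(T):=\left|\mathbb{E}\left[\frac{1}{T}\sum_{t=1}^T E_t\right]-\alpha\right|\le\frac{1}{T\eta_T}\left(LB+\frac{L\eta_1}{\mu\,p_{\min}}\right),$$ where $p_{\min}=\min_{t\in\{1,\dots,T\}}p_t$ and the expectation is over the feedback indicators $(\mathrm{obs}_t)$.
   Context: Fix $\alpha\in(0,1)$ and $B>0$. Let $(r_t^* )_{t\ge1}$ be an arbitrary deterministic sequence of scores with $r_t^*\in[0,B]$ (the score $r_t^*=s(X_t,Y_t)$ of the true label; the prediction set at time $t$ is $\{y: s(X_t,y)\le r_t\}$). Given thresholds $r_t$, the miscoverage indicator is $E_t=\mathbb{1}\{r_t^*>r_t\}$. The quantile loss is $\ell_{1-\alpha}(r,r^* )=(\alpha-\mathbb{1}\{r<r^*\})(r-r^* )$. Let $P$ be a probability distribution on $[0,B]$ with bounded density, $\sigma>0$, and $R(r)=\mathbb{E}_{r^*\sim P}[\ell_{1-\alpha}(r,r^* )]+\frac{\sigma}{2}r^2$; $R$ is differentiable and $\nabla R$ is a continuous strictly increasing bijection of $\mathbb{R}$. Let $\mu>0$ be a constant such that $R$ is $\mu$-strongly convex (e.g. $\mu=\sigma$) and $L>0$ a constant such that $\nabla R$ is $L$-Lipschitz. Feedback: $p_t\in(0,1]$ and $(\mathrm{obs}_t)_{t\ge1}$ are independent Bernoulli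 random variables with $\Pr(\mathrm{obs}_t=1)=p_t$. IM-OCP: given $r_1$ and step sizes $\eta_t>0$, for $t\ge2$ the threshold $r_t$ is defined by $$\nabla R(r_t)=\nabla R(r_{t-1})-\eta_{t-1}(\alpha-E_{t-1})\frac{\mathrm{obs}_{t-1}}{p_{t-1}}.$$ *)

theory Defs
  imports "HOL-Analysis.Analysis" "HOL-Probability.Probability"
begin

definition quantile_loss :: "real \<Rightarrow> real \<Rightarrow> real \<Rightarrow> real" where
  "quantile_loss \<alpha> r rs = (\<alpha> - (if r < rs then 1 else 0)) * (r - rs)"

definition quantile_risk :: "real measure \<Rightarrow> real \<Rightarrow> real \<Rightarrow> real \<Rightarrow> real" where
  "quantile_risk P \<alpha> \<sigma> r = (\<integral>rs. quantile_loss \<alpha> r rs \<partial>P) + \<sigma> / 2 * r\<^sup>2"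

definition strongly_convex :: "real \<Rightarrow> (real \<Rightarrow> real) \<Rightarrow> bool" where
  "strongly_convex \<mu> f \<longleftrightarrow>
     (\<forall>x y t. 0 \<le> t \<and> t \<le> 1 \<longrightarrow>
        f ((1 - t) * x + t * y) \<le> (1 - t) * f x + t * f y - \<mu> / 2 * t * (1 - t) * (x - y)\<^sup>2)"

definition miscov :: "real \<Rightarrow> real \<Rightarrow> real" where
  "miscov rs r = (if rs > r then 1 else 0)"

end

theory Submission
  imports Defs
begin



lemma sc_first_order:
  fixes f g :: "real \<Rightarrow> real"
  assumes sc: "strongly_convex \<mu> f" and d: "\<And>x. (f has_real_derivative g x) (at x)"
  shows "g x * (y - x) \<le> f y - f x - \<mu>/2 * (y-x)^2"
proof (rule ccontr)
  assume neg: "\<not> ?thesis"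
  define l where "l = g x * (y - x) - (f y - f x) + \<mu>/2 * (y-x)^2"
  have l: "0 < l" using neg unfolding l_def by simp
  define \<psi> where "\<psi> t = f (x + t*(y-x)) - f x - t*(f y - f x) + \<mu>/2 * (t*(1-t))*(y-x)^2" for t
  have D: "(\<psi> has_real_derivative l) (at 0)"
  proof -
    have c: "((\<lambda>t. f (x + t*(y-x))) has_real_derivative g (x + 0*(y-x)) * (y-x)) (at 0)"
      by (rule DERIV_chain2[OF d]) (auto intro!: derivative_eq_intros)
    show ?thesis unfolding \<psi>_def l_def
      by (rule derivative_eq_intros c refl | simp)+
  qed
  obtain e where e: "e > 0" "\<And>h. h > 0 \<Longrightarrow> h < e \<Longrightarrow> \<psi> 0 < \<psi> (0 + h)"
    using DERIV_pos_inc_right[OF D l] by blast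
  define h where "h = min (e/2) (1/2)"
  have h: "0 < h" "h < e" "h \<le> 1" using e unfolding h_def by auto
  have "\<psi> 0 < \<psi> h" using e(2)[OF h(1,2)] by simp
  moreover have "\<psi> 0 = 0" unfolding \<psi>_def by simp
  moreover have "\<psi> h \<le> 0"
  proof -
    have "f ((1 - h) * x + h * y) \<le> (1 - h) * f x + h * f y - \<mu> / 2 * h * (1 - h) * (x - y)\<^sup>2"
      using sc h unfolding strongly_convex_def by auto
    moreover have "(1 - h) * x + h * y = x + h*(y-x)" by (simp add: algebra_simps)
    moreover have "(x-y)^2 = (y-x)^2" by (simp add: power2_commute)
    ultimately show ?thesis unfolding \<psi>_def by (simp add: algebra_simps)
  qed
  ultimately show False by simp
qed

lemma sc_mono:
  fixes f g :: "real \<Rightarrow> real"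
  assumes sc: "strongly_convex \<mu> f" and d: "\<And>x. (f has_real_derivative g x) (at x)"
  shows "\<mu> * (y-x)^2 \<le> (g y - g x) * (y - x)"
proof -
  have 1: "g x * (y - x) \<le> f y - f x - \<mu>/2 * (y-x)^2" by (rule sc_first_order[OF sc d])
  have 2: "g y * (x - y) \<le> f x - f y - \<mu>/2 * (x-y)^2" by (rule sc_first_order[OF sc d])
  have "(x-y)^2 = (y-x)^2" by (simp add: power2_commute)
  with 1 2 show ?thesis by (simp add: algebra_simps)
qed

lemma abs_div_le: fixes u c e :: real shows "\<bar>u\<bar> \<le> c \<Longrightarrow> 0 < e \<Longrightarrow> \<bar>u / e\<bar> \<le> c / e"
  by (simp add: abs_divide divide_right_mono)

lemma telesc:
  fixes x \<eta> :: "nat \<Rightarrow> real"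
  assumes xb: "\<And>t. 1 \<le> t \<Longrightarrow> t \<le> n+1 \<Longrightarrow> a \<le> x t \<and> x t \<le> a + D"
    and ep: "\<And>t. 1 \<le> t \<Longrightarrow> 0 < \<eta> t" and em: "\<And>t. 1 \<le> t \<Longrightarrow> \<eta> (Suc t) \<le> \<eta> t"
    and n: "n \<ge> 1"
  shows "\<bar>\<Sum>t=1..n. (x t - x (Suc t)) / \<eta> t\<bar> \<le> D / \<eta> n"
proof -
  define h where "h t = x t - (a + D/2)" for t
  have hb: "\<bar>h t\<bar> \<le> D/2" if "1 \<le> t" "t \<le> n+1" for t
    using xb[OF that] unfolding h_def abs_le_iff by auto
  have eq: "(\<Sum>t=1..m. (x t - x (Suc t)) / \<eta> t) = (\<Sum>t=1..m. (h t - h (Suc t)) / \<eta> t)" for m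
    unfolding h_def by simp
  have Q: "\<bar>(\<Sum>t=1..m. (h t - h (Suc t)) / \<eta> t) + h (Suc m) / \<eta> m\<bar> \<le> (D/2) / \<eta> m"
    if "1 \<le> m" "m \<le> n" for m
    using that
  proof (induction m rule: dec_induct)
    case base
    have "\<bar>h 1\<bar> \<le> D/2" using hb n by auto
    moreover have "\<eta> 1 > 0" using ep by auto
    ultimately have "\<bar>h 1 / \<eta> 1\<bar> \<le> (D/2) / \<eta> 1" by (rule abs_div_le)
    moreover have "(h 1 - h 2)/\<eta> 1 + h 2/\<eta> 1 = h 1/\<eta> 1" by (simp add: diff_divide_distrib)
    ultimately show ?case by (simp add: numeral_2_eq_2)
  next
    case (step m)
    have e1: "\<eta> m > 0" "\<eta> (Suc m) > 0" "\<eta> (Suc m) \<le> \<eta> m" using ep em step by auto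
    have "(\<Sum>t=1..Suc m. (h t - h (Suc t)) / \<eta> t) + h (Suc (Suc m)) / \<eta> (Suc m)
        = ((\<Sum>t=1..m. (h t - h (Suc t)) / \<eta> t) + h (Suc m) / \<eta> m) + h (Suc m) * (1/\<eta> (Suc m) - 1/\<eta> m)"
      using step by (simp add: algebra_simps diff_divide_distrib)
    also have "\<bar>\<dots>\<bar> \<le> (D/2)/\<eta> m + \<bar>h (Suc m)\<bar> * (1/\<eta> (Suc m) - 1/\<eta> m)"
    proof -
      have "1/\<eta> m \<le> 1/\<eta> (Suc m)" using e1 by (simp add: frac_le)
      then show ?thesis using step.IH step by (simp add: abs_mult abs_triangle_ineq order_trans[OF abs_triangle_ineq] add_mono)
    qed
    also have "\<dots> \<le> (D/2)/\<eta> m + (D/2) * (1/\<eta> (Suc m) - 1/\<eta> m)"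
    proof -
      have "1/\<eta> m \<le> 1/\<eta> (Suc m)" using e1 by (simp add: frac_le)
      moreover have "\<bar>h (Suc m)\<bar> \<le> D/2" using hb step by auto
      ultimately have "\<bar>h (Suc m)\<bar> * (1/\<eta> (Suc m) - 1/\<eta> m) \<le> (D/2) * (1/\<eta> (Suc m) - 1/\<eta> m)"
        by (intro mult_right_mono) auto
      then show ?thesis by linarith
    qed
    also have "\<dots> = (D/2)/\<eta> (Suc m)" by (simp add: algebra_simps)
    finally show ?case .
  qed
  have "\<bar>(\<Sum>t=1..n. (h t - h (Suc t)) / \<eta> t)\<bar> \<le>
     \<bar>(\<Sum>t=1..n. (h t - h (Suc t)) / \<eta> t) + h (Suc n) / \<eta> n\<bar> + \<bar>h (Suc n) / \<eta> n\<bar>"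
    by linarith
  also have "\<dots> \<le> (D/2)/\<eta> n + (D/2)/\<eta> n"
  proof -
    have "\<bar>h (Suc n)\<bar> \<le> D/2" using hb n by auto
    moreover have "\<eta> n > 0" using ep n by auto
    ultimately have "\<bar>h (Suc n) / \<eta> n\<bar> \<le> (D/2)/\<eta> n" by (rule abs_div_le)
    then show ?thesis using Q[of n] n by linarith
  qed
  finally show ?thesis unfolding eq by simp
qed

lemma fin_PiM_bool_sets:
  assumes I: "finite I" and S: "S \<subseteq> space (PiM I (\<lambda>_. count_space (UNIV::bool set)))"
  shows "S \<in> sets (PiM I (\<lambda>_. count_space (UNIV::bool set)))"
proof -
  have sp: "space (PiM I (\<lambda>_. count_space (UNIV::bool set))) = PiE I (\<lambda>_. UNIV)"
    by (simp add: space_PiM)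
  have "finite (PiE I (\<lambda>_. UNIV :: bool set))" using I by (intro finite_PiE) auto
  then have fin: "finite S" using S unfolding sp by (rule finite_subset[rotated])
  have single: "{x} \<in> sets (PiM I (\<lambda>_. count_space (UNIV::bool set)))" if "x \<in> S" for x
  proof -
    have "x \<in> extensional I" using S that unfolding sp by (auto simp: PiE_def)
    then have "PiE I (\<lambda>i. {x i}) = {x}" by (rule PiE_singleton)
    moreover have "PiE I (\<lambda>i. {x i}) \<in> sets (PiM I (\<lambda>_. count_space (UNIV::bool set)))"
      using I by (intro sets_PiM_I_finite) auto
    ultimately show ?thesis by simp
  qed
  have "S = (\<Union>x\<in>S. {x})" by auto
  also have "\<dots> \<in> sets (PiM I (\<lambda>_. count_space (UNIV::bool set)))"
    using fin single by (intro sets.finite_UN) auto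
  finally show ?thesis .
qed

lemma fin_PiM_bool_meas:
  assumes I: "finite I"
  shows "(f :: _ \<Rightarrow> real) \<in> borel_measurable (PiM I (\<lambda>_. count_space (UNIV::bool set)))"
  by (rule measurableI) (auto intro!: fin_PiM_bool_sets[OF I])

primrec Fr :: "(real \<Rightarrow> real) \<Rightarrow> (nat \<Rightarrow> real) \<Rightarrow> (nat \<Rightarrow> real) \<Rightarrow> (nat \<Rightarrow> real) \<Rightarrow> real \<Rightarrow> real
   \<Rightarrow> nat \<Rightarrow> (nat \<Rightarrow> bool) \<Rightarrow> real" where
  "Fr g rs \<eta> p \<alpha> r1 0 b = r1"
| "Fr g rs \<eta> p \<alpha> r1 (Suc t) b = (if t = 0 then r1 else
     inv g (g (Fr g rs \<eta> p \<alpha> r1 t b) - \<eta> t * (\<alpha> - miscov (rs t) (Fr g rs \<eta> p \<alpha> r1 t b))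
        * (if b t then 1 else 0) / p t))"

lemma Fr_local:
  "(\<And>i. 1 \<le> i \<Longrightarrow> i < t \<Longrightarrow> b i = b' i) \<Longrightarrow> Fr g rs \<eta> p \<alpha> r1 t b = Fr g rs \<eta> p \<alpha> r1 t b'"
  by (induction t) auto



theorem theorem1:
  fixes \<alpha> B \<sigma> \<mu> L r1 :: real
    and rstar :: "nat \<Rightarrow> real"
    and P :: "real measure"
    and g :: "real \<Rightarrow> real"
    and M :: "'a measure"
    and obs :: "nat \<Rightarrow> 'a \<Rightarrow> bool"
    and p :: "nat \<Rightarrow> real"
    and \<eta> :: "nat \<Rightarrow> real"
    and r :: "nat \<Rightarrow> 'a \<Rightarrow> real"
    and T :: nat
  assumes alpha: "0 < \<alpha>" "\<alpha> < 1"
    and B: "0 < B"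
    and rstar: "\<And>t. t \<ge> 1 \<Longrightarrow> rstar t \<in> {0..B}"
    and P_prob: "prob_space P" and P_sets: "sets P = sets borel"
    and P_supp: "measure P {0..B} = 1"
    and P_density: "\<exists>f K. f \<in> borel_measurable borel \<and> (\<forall>x. 0 \<le> f x \<and> f x \<le> K)
                        \<and> P = density lborel (\<lambda>x. ennreal (f x))"
    and sigma: "0 < \<sigma>"
    and g_deriv: "\<And>x. (quantile_risk P \<alpha> \<sigma> has_real_derivative g x) (at x)"
    and mu: "0 < \<mu>" "strongly_convex \<mu> (quantile_risk P \<alpha> \<sigma>)"
    and L: "0 < L" "L-lipschitz_on UNIV g"
    and M_prob: "prob_space M"
    and obs_indep: "prob_space.indep_vars M (\<lambda>_. count_space UNIV) obs {1..}"
    and p: "\<And>t. t \<ge> 1 \<Longrightarrow> 0 < p t \<and> p t \<le> 1"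
    and obs_prob: "\<And>t. t \<ge> 1 \<Longrightarrow> measure M {\<omega> \<in> space M. obs t \<omega>} = p t"
    and eta_pos: "\<And>t. t \<ge> 1 \<Longrightarrow> 0 < \<eta> t"
    and eta_mono: "\<And>t. t \<ge> 1 \<Longrightarrow> \<eta> (Suc t) \<le> \<eta> t"
    and r1: "r1 \<in> {0..B}"
    and r_init: "\<And>\<omega>. \<omega> \<in> space M \<Longrightarrow> r 1 \<omega> = r1"
    and r_rec: "\<And>t \<omega>. t \<ge> 1 \<Longrightarrow> \<omega> \<in> space M \<Longrightarrow>
        g (r (Suc t) \<omega>) = g (r t \<omega>)
          - \<eta> t * (\<alpha> - miscov (rstar t) (r t \<omega>)) * (if obs t \<omega> then 1 else 0) / p t"
    and T: "T \<ge> 1"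
  shows "\<bar>prob_space.expectation M
            (\<lambda>\<omega>. (1 / real T) * (\<Sum>t = 1..T. miscov (rstar t) (r t \<omega>))) - \<alpha>\<bar>
         \<le> 1 / (real T * \<eta> T) * (L * B + L * \<eta> 1 / (\<mu> * Min (p ` {1..T})))"
  proof -
  interpret M: prob_space M by (rule M_prob)
  have gmono: "\<mu>*(y-x)^2 \<le> (g y - g x)*(y-x)" for x y by (rule sc_mono[OF mu(2) g_deriv])
  have g_le: "g x \<le> g y" if "x \<le> y" for x y
  proof (cases "x = y")
    case False
    then have "0 < \<mu>*(y-x)^2" using mu(1) by simp
    then have "0 < (g y - g x)*(y-x)" using gmono[of y x] by linarith
    then show ?thesis using that False by (simp add: zero_less_mult_iff)
  qed simp
  have inj: "inj g"
  proof (rule injI)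
    fix x y assume "g x = g y"
    then have "\<mu>*(y-x)^2 \<le> 0" using gmono[of y x] by simp
    then show "x = y" using mu(1) by (simp add: mult_le_0_iff)
  qed
  have muL: "\<mu> \<le> L"
  proof -
    have "\<mu> \<le> (g 1 - g 0)" using gmono[of 1 0] by simp
    also have "\<dots> \<le> dist (g 1) (g 0)" by (simp add: dist_real_def)
    also have "\<dots> \<le> L * dist (1::real) 0" by (rule lipschitz_onD[OF L(2)]) auto
    finally show ?thesis by simp
  qed
  have gB: "g B - g 0 \<le> L * B"
  proof -
    have "g B - g 0 \<le> dist (g B) (g 0)" by (simp add: dist_real_def)
    also have "\<dots> \<le> L * dist B 0" by (rule lipschitz_onD[OF L(2)]) auto
    finally show ?thesis using B by (simp add: dist_real_def)
  qed
  have obs_meas: "obs i \<in> measurable M (count_space UNIV)" if "i \<ge> 1" for i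
    using obs_indep that unfolding M.indep_vars_def by auto
  have eta1: "\<eta> t \<le> \<eta> 1" if "1 \<le> t" for t
    using that
  proof (induction t rule: dec_induct)
    case (step n) then show ?case using eta_mono[of n] by simp
  qed simp
  define pm where "pm = Min (p ` {1..T})"
  have pm_le: "pm \<le> p t" if "t \<in> {1..T}" for t unfolding pm_def using that by simp
  have pm_pos: "0 < pm"
  proof -
    have "pm \<in> p ` {1..T}" unfolding pm_def using T by (intro Min_in) auto
    then show ?thesis using p by auto
  qed
  have step_bd: "\<eta> t * c / p t \<le> \<eta> 1 * c / pm" if "1 \<le> t" "t \<le> T" "0 \<le> c" for t c
  proof -
    have "\<eta> t * c \<le> \<eta> 1 * c" using eta1[OF that(1)] that(3) by (rule mult_right_mono)
    then have "\<eta> t * c / p t \<le> \<eta> 1 * c / p t" using p[OF that(1)] by (simp add: divide_right_mono)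
    also have "\<dots> \<le> \<eta> 1 * c / pm"
      using pm_pos pm_le[of t] that eta_pos[of 1] by (intro frac_le) auto
    finally show ?thesis .
  qed
  define F where "F = Fr g rstar \<eta> p \<alpha> r1"
  have rF: "r t \<omega> = F t (\<lambda>i. obs i \<omega>)" if "1 \<le> t" "\<omega> \<in> space M" for t \<omega>
    using that(1)
  proof (induction t rule: dec_induct)
    case base then show ?case using r_init[OF that(2)] by (simp add: F_def)
  next
    case (step n)
    have "r (Suc n) \<omega> = inv g (g (r (Suc n) \<omega>))" using inj by simp
    also have "\<dots> = F (Suc n) (\<lambda>i. obs i \<omega>)"
      using r_rec[OF step(1) that(2)] step by (simp add: F_def)
    finally show ?case .
  qed
  have rF2: "r t \<omega> = F t (restrict (\<lambda>i. obs i \<omega>) {1..<t})" if "1 \<le> t" "\<omega> \<in> space M" for t \<omega>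
    unfolding rF[OF that] F_def by (rule Fr_local) simp
  define X where "X t \<omega> = miscov (rstar t) (r t \<omega>)" for t \<omega>
  define ind where "ind t \<omega> = (if obs t \<omega> then 1 else 0::real)" for t \<omega>
  define Y where "Y t \<omega> = (\<alpha> - X t \<omega>) * ind t \<omega> / p t" for t \<omega>
  have key: "integrable M (X t) \<and> integrable M (Y t) \<and> M.expectation (Y t) = \<alpha> - M.expectation (X t)"
    if t1: "1 \<le> t" for t
  proof -
    define U where "U \<omega> = \<alpha> - miscov (rstar t) (F t (restrict (\<lambda>i. obs i \<omega>) {1..<t}))" for \<omega>
    have iv: "M.indep_var (PiM {1..<t} (\<lambda>_. count_space UNIV)) (\<lambda>\<omega>. restrict (\<lambda>i. obs i \<omega>) {1..<t})
        (PiM {t} (\<lambda>_. count_space UNIV)) (\<lambda>\<omega>. restrict (\<lambda>i. obs i \<omega>) {t})"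
      by (rule M.indep_var_restrict[OF obs_indep]) (use t1 in auto)
    have iv2: "M.indep_var borel ((\<lambda>b. \<alpha> - miscov (rstar t) (F t b)) \<circ> (\<lambda>\<omega>. restrict (\<lambda>i. obs i \<omega>) {1..<t}))
        borel ((\<lambda>b. if b t then 1 else 0::real) \<circ> (\<lambda>\<omega>. restrict (\<lambda>i. obs i \<omega>) {t}))"
      by (rule M.indep_var_compose[OF iv]) (rule fin_PiM_bool_meas, simp)+
    have e1: "((\<lambda>b. \<alpha> - miscov (rstar t) (F t b)) \<circ> (\<lambda>\<omega>. restrict (\<lambda>i. obs i \<omega>) {1..<t})) = U"
      by (simp add: U_def fun_eq_iff)
    have e2: "((\<lambda>b. if b t then 1 else 0::real) \<circ> (\<lambda>\<omega>. restrict (\<lambda>i. obs i \<omega>) {t})) = ind t"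
      by (simp add: ind_def fun_eq_iff)
    have iv3: "M.indep_var borel U borel (ind t)" using iv2 unfolding e1 e2 .
    have Um: "U \<in> borel_measurable M"
    proof -
      have "(\<lambda>\<omega>. restrict (\<lambda>i. obs i \<omega>) {1..<t}) \<in> measurable M (PiM {1..<t} (\<lambda>_. count_space UNIV))"
        by (rule measurable_restrict) (use obs_meas in auto)
      from measurable_comp[OF this fin_PiM_bool_meas] show ?thesis unfolding U_def comp_def by simp
    qed
    have indm: "ind t \<in> borel_measurable M"
    proof -
      have "(\<lambda>b. if b then 1 else 0::real) \<in> measurable (count_space UNIV) borel" by simp
      from measurable_comp[OF obs_meas[OF t1] this] show ?thesis unfolding ind_def comp_def by simp
    qed
    have Ub: "\<bar>U \<omega>\<bar> \<le> 1" for \<omega> using alpha unfolding U_def miscov_def by auto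
    have indb: "\<bar>ind t \<omega>\<bar> \<le> 1" for \<omega> unfolding ind_def by auto
    have Ui: "integrable M U" by (rule M.integrable_const_bound[where B=1]) (use Ub Um in auto)
    have indi: "integrable M (ind t)" by (rule M.integrable_const_bound[where B=1]) (use indb indm in auto)
    have EUV: "M.expectation (\<lambda>\<omega>. U \<omega> * ind t \<omega>) = M.expectation U * M.expectation (ind t)"
      by (rule M.indep_var_lebesgue_integral[OF iv3 Ui indi])
    have UVi: "integrable M (\<lambda>\<omega>. U \<omega> * ind t \<omega>)"
      by (rule M.indep_var_integrable[OF iv3 Ui indi])
    define S where "S = {\<omega> \<in> space M. obs t \<omega>}"
    have Ssets: "S \<in> sets M"
    proof -
      have "obs t -` {True} \<inter> space M \<in> sets M" by (rule measurable_sets[OF obs_meas[OF t1]]) simp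
      moreover have "obs t -` {True} \<inter> space M = S" unfolding S_def by auto
      ultimately show ?thesis by simp
    qed
    have Eind: "M.expectation (ind t) = p t"
    proof -
      have "M.expectation (ind t) = M.expectation (indicator S)"
        by (rule Bochner_Integration.integral_cong) (auto simp: ind_def S_def indicator_def)
      also have "\<dots> = measure M S" using Ssets by (simp add: integral_indicator Int_absorb2 sets.sets_into_space)
      also have "\<dots> = p t" using obs_prob[OF t1] by (simp add: S_def)
      finally show ?thesis .
    qed
    have XU: "X t \<omega> = \<alpha> - U \<omega>" if "\<omega> \<in> space M" for \<omega>
      unfolding X_def U_def rF2[OF t1 that] by simp
    have YU: "Y t \<omega> = U \<omega> * ind t \<omega> / p t" if "\<omega> \<in> space M" for \<omega>
      unfolding Y_def XU[OF that] by simp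
    have Xi: "integrable M (X t)"
      using Ui by (subst Bochner_Integration.integrable_cong[OF refl XU]) auto
    have Yi: "integrable M (Y t)"
      using UVi by (subst Bochner_Integration.integrable_cong[OF refl YU]) auto
    have EX: "M.expectation (X t) = \<alpha> - M.expectation U"
    proof -
      have "M.expectation (X t) = M.expectation (\<lambda>\<omega>. \<alpha> - U \<omega>)"
        by (rule Bochner_Integration.integral_cong[OF refl XU])
      also have "\<dots> = \<alpha> - M.expectation U" using Ui by (simp add: M.prob_space)
      finally show ?thesis .
    qed
    have EY: "M.expectation (Y t) = M.expectation U"
    proof -
      have "M.expectation (Y t) = M.expectation (\<lambda>\<omega>. U \<omega> * ind t \<omega> / p t)"
        by (rule Bochner_Integration.integral_cong[OF refl YU])
      also have "\<dots> = M.expectation U * p t / p t" by (simp add: EUV Eind)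
      also have "\<dots> = M.expectation U" using p[OF t1] by simp
      finally show ?thesis .
    qed
    show ?thesis using Xi Yi EX EY by simp
  qed
  define lo where "lo = g 0 - \<eta> 1 * \<alpha> / pm"
  define hi where "hi = g B + \<eta> 1 * (1 - \<alpha>) / pm"
  have e1pos: "0 < \<eta> 1" using eta_pos by simp
  have lo0: "lo \<le> g 0" unfolding lo_def using e1pos alpha pm_pos by simp
  have hiB: "g B \<le> hi" unfolding hi_def using e1pos alpha pm_pos by simp
  have bounds: "lo \<le> g (r t \<omega>) \<and> g (r t \<omega>) \<le> hi" if \<omega>: "\<omega> \<in> space M" and tt: "1 \<le> t" "t \<le> Suc T" for t \<omega>
    using tt
  proof (induction t)
    case 0 then show ?case by simp
  next
    case (Suc t)
    show ?case
    proof (cases "t = 0")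
      case True
      then have "g 0 \<le> g (r (Suc t) \<omega>) \<and> g (r (Suc t) \<omega>) \<le> g B"
        using r_init[OF \<omega>] r1 by (auto intro!: g_le)
      then show ?thesis using lo0 hiB by linarith
    next
      case False
      then have t1: "1 \<le> t" and tT: "t \<le> T" using Suc by auto
      have IH: "lo \<le> g (r t \<omega>)" "g (r t \<omega>) \<le> hi" using Suc t1 by auto
      have rec: "g (r (Suc t) \<omega>) = g (r t \<omega>) - \<eta> t * (\<alpha> - miscov (rstar t) (r t \<omega>)) * (if obs t \<omega> then 1 else 0) / p t"
        by (rule r_rec[OF t1 \<omega>])
      have rs: "0 \<le> rstar t" "rstar t \<le> B" using rstar[OF t1] by auto
      have ep: "0 < \<eta> t" "0 < p t" using eta_pos p t1 by auto
      have sb1: "\<eta> t * (1 - \<alpha>) / p t \<le> \<eta> 1 * (1 - \<alpha>) / pm" using step_bd[OF t1 tT] alpha by simp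
      have sb2: "\<eta> t * \<alpha> / p t \<le> \<eta> 1 * \<alpha> / pm" using step_bd[OF t1 tT] alpha by simp
      have neg1: "\<eta> t * (\<alpha> - 1) / p t = - (\<eta> t * (1 - \<alpha>) / p t)" by (simp add: algebra_simps minus_divide_left)
      have nn1: "0 \<le> \<eta> t * (1 - \<alpha>) / p t" "0 \<le> \<eta> t * \<alpha> / p t" using ep alpha by auto
      have up: "g (r (Suc t) \<omega>) \<le> hi"
      proof (cases "g B < g (r t \<omega>)")
        case True
        then have "B < r t \<omega>" using g_le[of "r t \<omega>" B] by linarith
        then have "miscov (rstar t) (r t \<omega>) = 0" using rs by (simp add: miscov_def)
        then show ?thesis using rec IH nn1 by (auto simp: ) 
      next
        case False
        then show ?thesis using rec sb1 sb2 nn1 hiB neg1 by (auto simp: miscov_def hi_def)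
      qed
      have down: "lo \<le> g (r (Suc t) \<omega>)"
      proof (cases "g (r t \<omega>) < g 0")
        case True
        then have "r t \<omega> < 0" using g_le[of 0 "r t \<omega>"] by linarith
        then have "miscov (rstar t) (r t \<omega>) = 1" using rs by (simp add: miscov_def)
        then show ?thesis using rec IH nn1 alpha neg1 by auto
      next
        case False
        then show ?thesis using rec sb1 sb2 nn1 lo0 neg1 by (auto simp: miscov_def lo_def)
      qed
      show ?thesis using up down by simp
    qed
  qed
  define K where "K = L * B + L * \<eta> 1 / (\<mu> * Min (p ` {1..T}))"
  have etaT: "0 < \<eta> T" using eta_pos T by simp
  have DK: "hi - lo \<le> K"
  proof -
    have "hi - lo = g B - g 0 + \<eta> 1 / pm" unfolding hi_def lo_def by (simp add: algebra_simps add_divide_distrib[symmetric])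
    moreover have "\<eta> 1 / pm \<le> L * \<eta> 1 / (\<mu> * pm)"
    proof -
      have "\<eta> 1 * \<mu> \<le> L * \<eta> 1" using muL e1pos by (simp add: mult.commute mult_left_mono)
      then show ?thesis using pm_pos mu(1) by (simp add: field_simps)
    qed
    ultimately show ?thesis using gB unfolding K_def pm_def by linarith
  qed
  have sumY: "(\<Sum>t=1..T. Y t \<omega>) = (\<Sum>t=1..T. (g (r t \<omega>) - g (r (Suc t) \<omega>)) / \<eta> t)"
    if \<omega>: "\<omega> \<in> space M" for \<omega>
  proof (rule sum.cong)
    fix t assume "t \<in> {1..T}"
    then have t1: "1 \<le> t" by simp
    have "g (r t \<omega>) - g (r (Suc t) \<omega>) = \<eta> t * Y t \<omega>"
      unfolding r_rec[OF t1 \<omega>] Y_def X_def ind_def by simp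
    then show "Y t \<omega> = (g (r t \<omega>) - g (r (Suc t) \<omega>)) / \<eta> t" using eta_pos[OF t1] by simp
  qed simp
  have absY: "\<bar>\<Sum>t=1..T. Y t \<omega>\<bar> \<le> K / \<eta> T" if \<omega>: "\<omega> \<in> space M" for \<omega>
  proof -
    have "\<bar>\<Sum>t=1..T. (g (r t \<omega>) - g (r (Suc t) \<omega>)) / \<eta> t\<bar> \<le> (hi - lo) / \<eta> T"
      by (rule telesc[where a=lo]) (use bounds[OF \<omega>] eta_pos eta_mono T in auto)
    also have "\<dots> \<le> K / \<eta> T" using DK etaT by (simp add: divide_right_mono)
    finally show ?thesis using sumY[OF \<omega>] by simp
  qed
  have Yint: "integrable M (\<lambda>\<omega>. \<Sum>t=1..T. Y t \<omega>)" using key by auto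
  have EYb: "\<bar>M.expectation (\<lambda>\<omega>. \<Sum>t=1..T. Y t \<omega>)\<bar> \<le> K / \<eta> T"
  proof -
    have "\<bar>M.expectation (\<lambda>\<omega>. \<Sum>t=1..T. Y t \<omega>)\<bar> \<le> M.expectation (\<lambda>_. K / \<eta> T)"
    proof -
      have "\<bar>M.expectation (\<lambda>\<omega>. \<Sum>t=1..T. Y t \<omega>)\<bar> \<le> M.expectation (\<lambda>\<omega>. \<bar>\<Sum>t=1..T. Y t \<omega>\<bar>)"
        by (rule integral_abs_bound)
      also have "\<dots> \<le> M.expectation (\<lambda>_. K / \<eta> T)"
        by (rule integral_mono) (use Yint absY in \<open>auto intro: integrable_abs\<close>)
      finally show ?thesis .
    qed
    also have "\<dots> = K / \<eta> T" by (simp add: M.prob_space)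
    finally show ?thesis .
  qed
  have EX: "M.expectation (\<lambda>\<omega>. (1 / real T) * (\<Sum>t = 1..T. miscov (rstar t) (r t \<omega>)))
      = (1 / real T) * (\<Sum>t=1..T. M.expectation (X t))"
    unfolding integral_mult_right_zero X_def[symmetric]
    by (subst Bochner_Integration.integral_sum) (use key in auto)
  have sEX: "(\<Sum>t=1..T. M.expectation (X t)) = real T * \<alpha> - M.expectation (\<lambda>\<omega>. \<Sum>t=1..T. Y t \<omega>)"
  proof -
    have "(\<Sum>t=1..T. M.expectation (X t)) = (\<Sum>t=1..T. \<alpha> - M.expectation (Y t))"
      by (rule sum.cong) (use key in auto)
    also have "\<dots> = real T * \<alpha> - (\<Sum>t=1..T. M.expectation (Y t))" by (simp add: sum_subtractf)
    also have "(\<Sum>t=1..T. M.expectation (Y t)) = M.expectation (\<lambda>\<omega>. \<Sum>t=1..T. Y t \<omega>)"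
      by (subst Bochner_Integration.integral_sum) (use key in auto)
    finally show ?thesis .
  qed
  have "\<bar>M.expectation (\<lambda>\<omega>. (1 / real T) * (\<Sum>t = 1..T. miscov (rstar t) (r t \<omega>))) - \<alpha>\<bar>
      = \<bar>M.expectation (\<lambda>\<omega>. \<Sum>t=1..T. Y t \<omega>)\<bar> / real T"
    unfolding EX sEX using T by (simp add: field_simps abs_minus_commute)
  also have "\<dots> \<le> (K / \<eta> T) / real T" by (rule divide_right_mono[OF EYb]) simp
  also have "\<dots> = 1 / (real T * \<eta> T) * K" by simp
  finally show ?thesis unfolding K_def .
qed

end
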